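(* Let $f:T^2\to\mathbb R^4$ be a Hamiltonian stationary torus with $df=e^{j\beta/2}dz\,g$. A Darboux transform $\hat f:T^2\to\mathfrak C^2=\mathbb H$ of $f$ is Lagrangian in $\mathfrak C^2$ if and only if $\hat f=f+e^{j\beta/2}(\tau_0+j\tau_1)g$ with $\mathrm{Im}(\bar\tau_0\tau_1)=0$, where $\tau_0,\tau_1:T^2\to\mathbb C$.
   Context: Identify $\mathbb R^4$ with $\mathbb H$, $\mathbb C=\mathrm{span}_{\mathbb R}\{1,i\}$, $\mathfrak C=\mathrm{span}_{\mathbb R}\{1,j\}$, so $\mathbb H=\mathfrak C\oplus\mathfrak C i\cong\mathfrak C^2$ with complex structure left multiplication by $j$; "Lagrangian in $\mathfrak C^2$" refers to the corresponding symplectic structure, and a conformal immersion is Lagrangian iff its left normal ($*dF=N_F\,dF$) takes values in the circle $\{e^{j\theta}i\}$. $\langle\cdot,\cdot\rangle$ is the Euclidean inner product on $\mathbb C\cong\mathbb R^2$. $\Gamma\subset\mathbb C$ a lattice, $T^2=\mathbb C/\Gamma$, $\Gamma^*$ its dual lattice. A Hamiltonian stationary torus is a $\Gamma$-periodic conformal immersion $f:\mathbb C\to\mathbb H$ with $df=e^{j\beta/2}dz\,g$, $dz=dx+i\,dy$, $g$ nowhere zero, $\beta(z)=2\pi\langle\beta_0,z\rangle$, $0\ne\beta_0\in\Gamma^*$; convention $*dz=i\,dz$; left normal $N=e^{j\beta}i$. Holomorphic: $*d\alpha=N\,d\alpha$. Darboux transform given by a nowhere vanishing holomorphic $\alpha$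 with multiplier ($\alpha(z+\gamma)=\alpha(z)h(\gamma)$, $h:\Gamma\to\mathbb C_*$): define $\hat T$ by $d\alpha=-df\,\hat T\alpha$; where $\hat T\ne0$ the Darboux transform is $\hat f=f+\hat T^{-1}$. *)

theory Defs
  imports "HOL-Analysis.Analysis"
begin

text \<open>A quaternion a + b j (a, b in C = span{1,i}) is the pair (a, b).
 Since j c = cnj c j for c in C, the product is
 (a + b j)(c + d j) = (a c - b cnj d) + (a d + b cnj c) j.
 The norm / inner product of the product type is the Euclidean one of R^4.\<close>

type_synonym quat = "complex \<times> complex"

definition qmul :: "quat \<Rightarrow> quat \<Rightarrow> quat" where
  "qmul p q = (fst p * fst q - snd p * cnj (snd q), fst p * snd q + snd p * cnj (fst q))"

definition qinv :: "quat \<Rightarrow> quat" where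
  "qinv q = (1 / (norm q)\<^sup>2) *\<^sub>R (cnj (fst q), - snd q)"

definition cq :: "complex \<Rightarrow> quat" where
  "cq c = (c, 0)"

definition qi :: quat where "qi = (\<i>, 0)"
definition qj :: quat where "qj = (0, 1)"

definition qexpj :: "real \<Rightarrow> quat" where
  "qexpj t = (complex_of_real (cos t), complex_of_real (sin t))"

definition lattice :: "complex set \<Rightarrow> bool" where
  "lattice \<Gamma> \<longleftrightarrow> (\<exists>w1 w2. Im (cnj w1 * w2) \<noteq> 0 \<and>
      \<Gamma> = {of_int m * w1 + of_int n * w2 | m n. True})"

definition dual_lattice :: "complex set \<Rightarrow> complex set" where
  "dual_lattice \<Gamma> = {v. \<forall>\<gamma>\<in>\<Gamma>. v \<bullet> \<gamma> \<in> \<int>}"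

definition periodic :: "complex set \<Rightarrow> (complex \<Rightarrow> 'b) \<Rightarrow> bool" where
  "periodic \<Gamma> F \<longleftrightarrow> (\<forall>\<gamma>\<in>\<Gamma>. \<forall>z. F (z + \<gamma>) = F z)"

coinductive smooth :: "('a::real_normed_vector \<Rightarrow> 'b::real_normed_vector) \<Rightarrow> bool" where
  "(\<And>x. (F has_derivative D x) (at x)) \<Longrightarrow> (\<And>v. smooth (\<lambda>x. D x v)) \<Longrightarrow> smooth F"

definition immersion :: "(complex \<Rightarrow> quat) \<Rightarrow> bool" where
  "immersion F \<longleftrightarrow> (\<forall>z. \<exists>D. (F has_derivative D) (at z) \<and> inj D)"

definition beta :: "complex \<Rightarrow> complex \<Rightarrow> real" where
  "beta \<beta>0 z = 2 * pi * (\<beta>0 \<bullet> z)"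

definition HS_torus :: "complex set \<Rightarrow> complex \<Rightarrow> (complex \<Rightarrow> quat) \<Rightarrow> (complex \<Rightarrow> quat) \<Rightarrow> bool" where
  "HS_torus \<Gamma> \<beta>0 f g \<longleftrightarrow>
     lattice \<Gamma> \<and> \<beta>0 \<in> dual_lattice \<Gamma> \<and> \<beta>0 \<noteq> 0 \<and>
     smooth f \<and> periodic \<Gamma> f \<and> (\<forall>z. g z \<noteq> 0) \<and>
     (\<forall>z. (f has_derivative (\<lambda>v. qmul (qmul (qexpj (beta \<beta>0 z / 2)) (cq v)) (g z))) (at z))"

text \<open>*d alpha = N d alpha, with (*omega)(v) = omega(i v) (so *dz = i dz)\<close>
definition holomorphic_wrt :: "(complex \<Rightarrow> quat) \<Rightarrow> (complex \<Rightarrow> quat) \<Rightarrow> bool" where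
  "holomorphic_wrt N \<alpha> \<longleftrightarrow> (\<forall>z. \<exists>D. (\<alpha> has_derivative D) (at z) \<and>
      (\<forall>v. D (\<i> * v) = qmul (N z) (D v)))"

definition has_multiplier :: "complex set \<Rightarrow> (complex \<Rightarrow> quat) \<Rightarrow> bool" where
  "has_multiplier \<Gamma> \<alpha> \<longleftrightarrow> (\<exists>h :: complex \<Rightarrow> complex. (\<forall>\<gamma>\<in>\<Gamma>. h \<gamma> \<noteq> 0) \<and>
      (\<forall>\<gamma>\<in>\<Gamma>. \<forall>z. \<alpha> (z + \<gamma>) = qmul (\<alpha> z) (cq (h \<gamma>))))"

section \<open>Lagrangian in C^2 (complex structure: left multiplication by j)\<close>

definition omega :: "quat \<Rightarrow> quat \<Rightarrow> real" where
  "omega x y = inner (qmul qj x) y"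

definition lagrangian :: "(complex \<Rightarrow> quat) \<Rightarrow> bool" where
  "lagrangian F \<longleftrightarrow> immersion F \<and>
     (\<forall>z D. (F has_derivative D) (at z) \<longrightarrow> (\<forall>v w. omega (D v) (D w) = 0))"

end

theory Submission
  imports Defs
begin


definition qconj :: "quat \<Rightarrow> quat" where "qconj q = (cnj (fst q), - snd q)"

lemmas qsimps = qmul_def qconj_def prod_eq_iff complex_eq_iff cq_def qi_def qj_def

lemma qmul_assoc: "qmul (qmul p q) r = qmul p (qmul q r)"
  by (simp add: qmul_def prod_eq_iff algebra_simps)

lemma qmul_one_right[simp]: "qmul q (1,0) = q" and qmul_one_left[simp]: "qmul (1,0) q = q"
  by (simp_all add: qmul_def)

lemma qmul_zero[simp]: "qmul q 0 = 0" "qmul 0 q = 0"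
  by (simp_all add: qmul_def zero_prod_def)

lemma norm_qmul: "norm (qmul p q) = norm p * norm q"
proof -
  obtain a b c d where "p=(a,b)" "q=(c,d)" by (cases p, cases q)
  have "(norm (qmul p q))^2 = (norm p * norm q)^2"
    unfolding `p=(a,b)` `q=(c,d)` qmul_def
    apply (simp add: norm_Pair power_mult_distrib cmod_power2 )
    apply (simp add: algebra_simps power2_eq_square)
    done
  then show ?thesis by (simp add: power2_eq_iff_nonneg)
qed

lemma qmul_add_left: "qmul (p + q) r = qmul p r + qmul q r"
  and qmul_add_right: "qmul r (p + q) = qmul r p + qmul r q"
  and qmul_scaleR_left: "qmul (c *\<^sub>R p) r = c *\<^sub>R qmul p r"
  and qmul_scaleR_right: "qmul r (c *\<^sub>R p) = c *\<^sub>R qmul r p"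
  and qmul_minus_left: "qmul (- p) r = - qmul p r"
  and qmul_minus_right: "qmul r (- p) = - qmul r p"
  and qmul_diff_left: "qmul (p - q) r = qmul p r - qmul q r"
  and qmul_diff_right: "qmul r (p - q) = qmul r p - qmul r q"
  by (simp_all add: qmul_def algebra_simps scaleR_conv_of_real)

lemma bb_qmul: "bounded_bilinear qmul"
proof
  show "\<exists>K. \<forall>a b. norm (qmul a b) \<le> norm a * norm b * K"
    by (rule exI[of _ 1]) (simp add: norm_qmul)
qed (simp_all add: qmul_add_left qmul_add_right qmul_scaleR_left qmul_scaleR_right)

lemma qmul_qconj: "qmul q (qconj q) = (complex_of_real ((norm q)^2), 0)"
  and qconj_qmul: "qmul (qconj q) q = (complex_of_real ((norm q)^2), 0)"
proof -
  obtain a b where q: "q=(a,b)" by (cases q)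
  show "qmul q (qconj q) = (complex_of_real ((norm q)^2), 0)"
    unfolding q by (simp add: qmul_def qconj_def norm_Pair complex_mult_cnj cmod_power2 algebra_simps)
  show "qmul (qconj q) q = (complex_of_real ((norm q)^2), 0)"
    unfolding q by (simp add: qmul_def qconj_def norm_Pair complex_mult_cnj cmod_power2 algebra_simps)
qed

lemma qinv_alt: "qinv q = (1 / (norm q)\<^sup>2) *\<^sub>R qconj q"
  by (simp add: qinv_def qconj_def)

lemma qmul_real: "qmul q (complex_of_real r, 0) = r *\<^sub>R q" "qmul (complex_of_real r, 0) q = r *\<^sub>R q"
  by (simp_all add: qmul_def scaleR_conv_of_real prod_eq_iff)

lemma qinv_right: "q \<noteq> 0 \<Longrightarrow> qmul q (qinv q) = (1,0)"
  and qinv_left: "q \<noteq> 0 \<Longrightarrow> qmul (qinv q) q = (1,0)"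
  by (simp_all add: qinv_alt qmul_scaleR_right qmul_scaleR_left qmul_qconj qconj_qmul qmul_real
       scaleR_conv_of_real prod_eq_iff)

lemma qinv_nz: "q \<noteq> 0 \<Longrightarrow> qinv q \<noteq> 0"
proof
  assume "q \<noteq> 0" "qinv q = 0"
  then have "qmul q (qinv q) = 0" by simp
  with qinv_right[OF \<open>q \<noteq> 0\<close>] show False by (simp add: zero_prod_def)
qed

lemma qmul_nz: "p \<noteq> 0 \<Longrightarrow> q \<noteq> 0 \<Longrightarrow> qmul p q \<noteq> 0"
  by (metis norm_qmul norm_eq_zero mult_eq_0_iff)

lemma qmul_cancel_left: "p \<noteq> 0 \<Longrightarrow> qmul p x = qmul p y \<Longrightarrow> x = y"
  by (metis qinv_left qmul_assoc qmul_one_left)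
lemma qmul_cancel_right: "p \<noteq> 0 \<Longrightarrow> qmul x p = qmul y p \<Longrightarrow> x = y"
  by (metis qinv_right qmul_assoc qmul_one_right)

lemma qinv_unique: "qmul p q = (1,0) \<Longrightarrow> p \<noteq> 0 \<Longrightarrow> q = qinv p"
  by (metis qinv_left qmul_assoc qmul_one_left qmul_one_right)

lemma qinv_qmul: "p \<noteq> 0 \<Longrightarrow> q \<noteq> 0 \<Longrightarrow> qinv (qmul p q) = qmul (qinv q) (qinv p)"
  by (metis qinv_unique qmul_nz qinv_right qmul_assoc qmul_one_left)

lemma qinv_qinv: "q \<noteq> 0 \<Longrightarrow> qinv (qinv q) = q"
  by (metis qinv_unique qinv_left qinv_nz)


lemma bl_qconj: "bounded_linear qconj"
  by (rule bounded_linear_intro[where K=1]) (auto simp: qconj_def norm_Pair)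

lemma qconj_identity: "qmul (qmul (qconj x) h) (qconj x) = (2 * inner x h) *\<^sub>R qconj x - (inner x x) *\<^sub>R qconj h"
proof -
  obtain a b c d where xh: "x=(a,b)" "h=(c,d)" by (cases x, cases h)
  show ?thesis unfolding xh
    by (simp add: qmul_def qconj_def prod_eq_iff complex_eq_iff inner_complex_def algebra_simps power2_eq_square)
qed

lemma has_derivative_qinv:
  assumes "x \<noteq> 0"
  shows "(qinv has_derivative (\<lambda>h. - qmul (qmul (qinv x) h) (qinv x))) (at x)"
proof -
  have eq: "qinv = (\<lambda>q. inverse (inner q q) *\<^sub>R qconj q)"
    by (auto simp: qinv_alt power2_norm_eq_inner divide_inverse_commute fun_eq_iff)
  have ix: "inner x x \<noteq> 0" using assms by simp
  have "((\<lambda>q. inverse (inner q q) *\<^sub>R qconj q) has_derivative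
     (\<lambda>h. inverse (inner x x) *\<^sub>R qconj h + (- (inverse (inner x x) * (inner h x + inner x h) * inverse (inner x x))) *\<^sub>R qconj x)) (at x)"
    using ix
    by (auto intro!: derivative_eq_intros bounded_linear.has_derivative[OF bl_qconj])
  moreover have "(\<lambda>h. inverse (inner x x) *\<^sub>R qconj h + (- (inverse (inner x x) * (inner h x + inner x h) * inverse (inner x x))) *\<^sub>R qconj x)
      = (\<lambda>h. - qmul (qmul (qinv x) h) (qinv x))"
  proof
    fix h
    have "- qmul (qmul (qinv x) h) (qinv x) = - (inverse (inner x x) * inverse (inner x x)) *\<^sub>R qmul (qmul (qconj x) h) (qconj x)"
      by (simp add: eq qmul_scaleR_left qmul_scaleR_right)
    also have "\<dots> = inverse (inner x x) *\<^sub>R qconj h + (- (inverse (inner x x) * (inner h x + inner x h) * inverse (inner x x))) *\<^sub>R qconj x"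
      using ix by (simp add: qconj_identity algebra_simps inner_commute)
    finally show "inverse (inner x x) *\<^sub>R qconj h + (- (inverse (inner x x) * (inner h x + inner x h) * inverse (inner x x))) *\<^sub>R qconj x
      = - qmul (qmul (qinv x) h) (qinv x)" by simp
  qed
  ultimately show ?thesis by (simp add: eq)
qed

lemma has_derivative_qinv_comp:
  assumes "(F has_derivative F') (at z)" "F z \<noteq> 0"
  shows "((\<lambda>z. qinv (F z)) has_derivative (\<lambda>h. - qmul (qmul (qinv (F z)) (F' h)) (qinv (F z)))) (at z)"
  using has_derivative_compose[OF assms(1) has_derivative_qinv[OF assms(2)]] by simp

lemma has_derivative_qmul:
  assumes "(F has_derivative F') (at z)" "(G has_derivative G') (at z)"
  shows "((\<lambda>z. qmul (F z) (G z)) has_derivative (\<lambda>h. qmul (F z) (G' h) + qmul (F' h) (G z))) (at z)"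
  using bounded_bilinear.FDERIV[OF bb_qmul assms] .



lemma sd_bound:
  fixes F :: "'a::real_normed_vector \<Rightarrow> 'b::real_inner"
  assumes D: "\<And>x. (F has_derivative D x) (at x)"
    and E: "((\<lambda>x. D x v) has_derivative Ev) (at x0)"
    and e: "e > 0"
  shows "\<exists>d>0. \<forall>t. 0 < t \<and> t < d \<longrightarrow>
     norm (F (x0 + t *\<^sub>R v + t *\<^sub>R w) - F (x0 + t *\<^sub>R v) - F (x0 + t *\<^sub>R w) + F x0 - (t*t) *\<^sub>R Ev w)
       \<le> e * (t*t) * (2 * norm v + norm w)"
proof -
  have blE: "bounded_linear Ev" using E by (simp add: has_derivative_at_alt)
  from E e obtain d0 where d0: "d0 > 0"
    and d0b: "\<And>y. norm (y - x0) < d0 \<Longrightarrow> norm (D y v - D x0 v - Ev (y - x0)) \<le> e * norm (y - x0)"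
    unfolding has_derivative_at_alt by blast
  define d where "d = d0 / (norm v + norm w + 1)"
  have npos: "norm v + norm w + 1 > 0" by (simp add: add_nonneg_pos)
  have dpos: "d > 0" using d0 npos by (simp add: d_def)
  have linD: "\<And>x. linear (D x)" using D has_derivative_linear by blast
  show ?thesis
  proof (intro exI[of _ d] conjI allI impI dpos)
    fix t :: real assume t: "0 < t \<and> t < d"
    have td0: "t * (norm v + norm w) < d0"
    proof -
      have "t * (norm v + norm w) \<le> t * (norm v + norm w + 1)" using t by simp
      also have "\<dots> < d * (norm v + norm w + 1)"
        using t by (intro mult_strict_right_mono npos) auto
      also have "\<dots> = d0" using npos by (simp add: d_def)
      finally show ?thesis .
    qed
    define \<phi> where "\<phi> s = F (x0 + s *\<^sub>R v + t *\<^sub>R w) - F (x0 + s *\<^sub>R v) - s *\<^sub>R (t *\<^sub>R Ev w)" for s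
    define \<phi>' where "\<phi>' s h = D (x0 + s *\<^sub>R v + t *\<^sub>R w) (h *\<^sub>R v) - D (x0 + s *\<^sub>R v) (h *\<^sub>R v) - h *\<^sub>R (t *\<^sub>R Ev w)" for s h
    have der: "(\<phi> has_derivative \<phi>' s) (at s)" for s
    proof -
      have 1: "((\<lambda>s. x0 + s *\<^sub>R v + t *\<^sub>R w) has_derivative (\<lambda>h. h *\<^sub>R v)) (at s)"
        by (auto intro!: derivative_eq_intros)
      have 2: "((\<lambda>s. x0 + s *\<^sub>R v) has_derivative (\<lambda>h. h *\<^sub>R v)) (at s)"
        by (auto intro!: derivative_eq_intros)
      have 3: "((\<lambda>s. s *\<^sub>R (t *\<^sub>R Ev w)) has_derivative (\<lambda>h. h *\<^sub>R (t *\<^sub>R Ev w))) (at s)"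
        by (auto intro!: derivative_eq_intros)
      show ?thesis unfolding \<phi>_def[abs_def] \<phi>'_def
        by (intro has_derivative_diff has_derivative_compose[OF 1 D] has_derivative_compose[OF 2 D] 3)
    qed
    have cont: "continuous_on {0..t} \<phi>"
      using der by (meson has_derivative_continuous continuous_at_imp_continuous_on)
    from mvt_general[of 0 t \<phi> \<phi>'] t cont der obtain x where x: "x \<in> {0<..<t}"
      and mv: "norm (\<phi> t - \<phi> 0) \<le> norm (\<phi>' x (t - 0))" by auto
    define p1 where "p1 = x0 + x *\<^sub>R v + t *\<^sub>R w"
    define p2 where "p2 = x0 + x *\<^sub>R v"
    have n1: "norm (p1 - x0) \<le> t * (norm v + norm w)"
    proof -
      have "norm (p1 - x0) = norm (x *\<^sub>R v + t *\<^sub>R w)" by (simp add: p1_def algebra_simps)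
      also have "\<dots> \<le> norm (x *\<^sub>R v) + norm (t *\<^sub>R w)" by (rule norm_triangle_ineq)
      also have "\<dots> \<le> t * norm v + t * norm w" using x t
        by (intro add_mono) (auto intro!: mult_right_mono)
      finally show ?thesis by (simp add: algebra_simps)
    qed
    have n2: "norm (p2 - x0) \<le> t * norm v"
      using x by (auto simp: p2_def intro!: mult_right_mono)
    have n2': "t * norm v \<le> t * (norm v + norm w)" using t by simp
    have b1: "norm (D p1 v - D x0 v - Ev (p1 - x0)) \<le> e * norm (p1 - x0)"
      using n1 td0 by (intro d0b) linarith
    have b2: "norm (D p2 v - D x0 v - Ev (p2 - x0)) \<le> e * norm (p2 - x0)"
      using n2 n2' td0 by (intro d0b) linarith
    have lin: "Ev (p1 - x0) - Ev (p2 - x0) = t *\<^sub>R Ev w"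
    proof -
      have linE: "linear Ev" using blE bounded_linear.linear by blast
      have "Ev (p1 - x0) - Ev (p2 - x0) = Ev ((p1 - x0) - (p2 - x0))" by (simp add: linear_diff[OF linE])
      also have "(p1 - x0) - (p2 - x0) = t *\<^sub>R w" by (simp add: p1_def p2_def)
      finally show ?thesis by (simp add: linear_scale[OF linE])
    qed
    have "\<phi>' x (t - 0) = t *\<^sub>R ((D p1 v - D x0 v - Ev (p1 - x0)) - (D p2 v - D x0 v - Ev (p2 - x0)))"
    proof -
      have "\<phi>' x (t - 0) = D p1 (t *\<^sub>R v) - D p2 (t *\<^sub>R v) - t *\<^sub>R (t *\<^sub>R Ev w)"
        by (simp add: \<phi>'_def p1_def p2_def)
      also have "\<dots> = t *\<^sub>R (D p1 v - D p2 v - t *\<^sub>R Ev w)"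
        by (simp add: linear_scale[OF linD] scaleR_diff_right)
      also have "\<dots> = t *\<^sub>R ((D p1 v - D x0 v - Ev (p1 - x0)) - (D p2 v - D x0 v - Ev (p2 - x0)))"
        using lin by (simp add: algebra_simps)
      finally show ?thesis .
    qed
    then have "norm (\<phi>' x (t - 0)) = t * norm ((D p1 v - D x0 v - Ev (p1 - x0)) - (D p2 v - D x0 v - Ev (p2 - x0)))"
      using t by simp
    also have "\<dots> \<le> t * (norm (D p1 v - D x0 v - Ev (p1 - x0)) + norm (D p2 v - D x0 v - Ev (p2 - x0)))"
      using t by (intro mult_left_mono norm_triangle_ineq4) auto
    also have "\<dots> \<le> t * (e * norm (p1 - x0) + e * norm (p2 - x0))"
      using t b1 b2 by (intro mult_left_mono add_mono) auto
    also have "\<dots> \<le> t * (e * (t * (norm v + norm w)) + e * (t * norm v))"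
      using t e n1 n2 by (intro mult_left_mono add_mono) auto
    also have "\<dots> = e * (t*t) * (2 * norm v + norm w)" by (simp add: algebra_simps)
    finally have "norm (\<phi> t - \<phi> 0) \<le> e * (t*t) * (2 * norm v + norm w)" using mv by linarith
    then show "norm (F (x0 + t *\<^sub>R v + t *\<^sub>R w) - F (x0 + t *\<^sub>R v) - F (x0 + t *\<^sub>R w) + F x0 - (t*t) *\<^sub>R Ev w)
       \<le> e * (t*t) * (2 * norm v + norm w)"
      by (simp add: \<phi>_def algebra_simps)
  qed
qed


lemma le_eps_zero:
  fixes x K :: real
  assumes "\<And>e. e > 0 \<Longrightarrow> x \<le> e * K" "K \<ge> 0"
  shows "x \<le> 0"
proof (rule ccontr)
  assume "\<not> x \<le> 0"
  then have x: "x > 0" by simp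
  have "x \<le> (x / (2 * (K + 1))) * K" using assms(1)[of "x / (2 * (K+1))"] x assms(2) by auto
  also have "\<dots> < x" using x assms(2) by (simp add: field_simps add_nonneg_pos)
  finally show False by simp
qed

lemma second_deriv_sym:
  fixes F :: "'a::real_normed_vector \<Rightarrow> 'b::real_inner"
  assumes D: "\<And>x. (F has_derivative D x) (at x)"
    and Ev: "((\<lambda>x. D x v) has_derivative Ev) (at x0)"
    and Ew: "((\<lambda>x. D x w) has_derivative Ew) (at x0)"
  shows "Ev w = Ew v"
proof -
  have "norm (Ev w - Ew v) \<le> 0"
  proof (rule le_eps_zero[where K = "3 * (norm v + norm w)"])
    fix e :: real assume e: "e > 0"
    from sd_bound[OF D Ev e, of w] obtain d1 where d1: "d1 > 0" and
      b1: "\<And>t. 0 < t \<and> t < d1 \<Longrightarrow> norm (F (x0 + t *\<^sub>R v + t *\<^sub>R w) - F (x0 + t *\<^sub>R v) - F (x0 + t *\<^sub>R w) + F x0 - (t*t) *\<^sub>R Ev w)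
       \<le> e * (t*t) * (2 * norm v + norm w)" by blast
    from sd_bound[OF D Ew e, of v] obtain d2 where d2: "d2 > 0" and
      b2: "\<And>t. 0 < t \<and> t < d2 \<Longrightarrow> norm (F (x0 + t *\<^sub>R w + t *\<^sub>R v) - F (x0 + t *\<^sub>R w) - F (x0 + t *\<^sub>R v) + F x0 - (t*t) *\<^sub>R Ew v)
       \<le> e * (t*t) * (2 * norm w + norm v)" by blast
    define t where "t = min d1 d2 / 2"
    have t: "0 < t" "t < d1" "t < d2" using d1 d2 by (auto simp: t_def)
    define \<Delta> where "\<Delta> = F (x0 + t *\<^sub>R v + t *\<^sub>R w) - F (x0 + t *\<^sub>R v) - F (x0 + t *\<^sub>R w) + F x0"
    have eqx: "x0 + t *\<^sub>R w + t *\<^sub>R v = x0 + t *\<^sub>R v + t *\<^sub>R w" by (simp add: algebra_simps)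
    have c1: "norm (\<Delta> - (t*t) *\<^sub>R Ev w) \<le> e * (t*t) * (2 * norm v + norm w)"
      using b1[of t] t by (simp add: \<Delta>_def)
    have c2: "norm (\<Delta> - (t*t) *\<^sub>R Ew v) \<le> e * (t*t) * (2 * norm w + norm v)"
    proof -
      have "F (x0 + t *\<^sub>R w + t *\<^sub>R v) - F (x0 + t *\<^sub>R w) - F (x0 + t *\<^sub>R v) + F x0 = \<Delta>"
        unfolding \<Delta>_def eqx by (simp add: algebra_simps)
      then show ?thesis using b2[of t] t by simp
    qed
    have "(\<Delta> - (t*t) *\<^sub>R Ew v) - (\<Delta> - (t*t) *\<^sub>R Ev w) = (t*t) *\<^sub>R (Ev w - Ew v)"
      by (simp add: scaleR_diff_right)
    then have "(t*t) * norm (Ev w - Ew v) = norm ((\<Delta> - (t*t) *\<^sub>R Ew v) - (\<Delta> - (t*t) *\<^sub>R Ev w))"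
      using t by simp
    also have "\<dots> \<le> norm (\<Delta> - (t*t) *\<^sub>R Ew v) + norm (\<Delta> - (t*t) *\<^sub>R Ev w)" by (rule norm_triangle_ineq4)
    also have "\<dots> \<le> (t*t) * (e * (3 * (norm v + norm w)))" using c1 c2 by (simp add: field_simps)
    finally show "norm (Ev w - Ew v) \<le> e * (3 * (norm v + norm w))"
      using t by (simp add: mult_le_cancel_left_pos)
  qed simp
  then show ?thesis by simp
qed



lemma qexpj_norm: "norm (qexpj t) = 1"
  by (simp add: qexpj_def norm_Pair)

lemma qexpj_nz: "qexpj t \<noteq> 0"
  using qexpj_norm[of t] by auto

lemma qinv_qexpj: "qinv (qexpj t) = qconj (qexpj t)"
  by (simp add: qinv_alt qexpj_norm)

lemma E_conj_inner: "inner qj (qmul (qmul (qexpj t) Y) (qinv (qexpj t))) = inner qj Y"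
proof -
  obtain a b where Y: "Y = (a,b)" by (cases Y)
  have cs: "cos t * cos t = 1 - sin t * sin t" by (simp add: cos_squared_eq[unfolded power2_eq_square])
  have "inner qj (qmul (qmul (qexpj t) Y) (qconj (qexpj t))) = inner qj Y"
    unfolding Y by (simp add: qexpj_def qmul_def qconj_def qj_def inner_complex_def algebra_simps cs)
  then show ?thesis by (simp add: qinv_qexpj)
qed

lemma tau_inner: "inner qj (qmul (qmul (a,b) qi) (qconj (a,b))) = - 2 * Im (cnj a * cnj b)"
  by (simp add: qmul_def qconj_def qj_def qi_def inner_complex_def algebra_simps)

lemma omega_scale: "inner (qmul qj X) (qmul M X) = inner X X * inner qj M"
proof -
  obtain a b c d where XM: "X = (a,b)" "M = (c,d)" by (cases X, cases M)
  show ?thesis unfolding XM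
    by (simp add: qmul_def qj_def inner_complex_def algebra_simps)
qed

lemma omega_self: "omega p p = 0"
proof -
  obtain a b where p: "p = (a,b)" by (cases p)
  show ?thesis unfolding p by (simp add: omega_def qmul_def qj_def inner_complex_def algebra_simps)
qed

lemma omega_antisym: "omega q p = - omega p q"
proof -
  obtain a b c d where pq: "p = (a,b)" "q = (c,d)" by (cases p, cases q)
  show ?thesis unfolding pq by (simp add: omega_def qmul_def qj_def inner_complex_def algebra_simps)
qed

lemma omega_expand: "omega (a *\<^sub>R X + b *\<^sub>R Y) (c *\<^sub>R X + d *\<^sub>R Y) = (a * d - b * c) * omega X Y"
proof -
  have "omega (a *\<^sub>R X + b *\<^sub>R Y) (c *\<^sub>R X + d *\<^sub>R Y) =
     a * c * omega X X + a * d * omega X Y + b * c * omega Y X + b * d * omega Y Y"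
    by (simp add: omega_def qmul_add_right qmul_scaleR_right inner_add_left inner_add_right algebra_simps)
  then show ?thesis by (simp add: omega_self omega_antisym[of Y X] algebra_simps)
qed



lemma smooth_has_derivative: "smooth F \<Longrightarrow> \<exists>D. \<forall>x. (F has_derivative D x) (at x)"
  using smooth.simps[of F] by blast

lemma smooth_second:
  assumes "smooth F" "\<And>x. (F has_derivative D x) (at x)"
  shows "\<exists>E. \<forall>v x. ((\<lambda>x. D x v) has_derivative E v x) (at x)"
proof -
  from assms(1) obtain D' where D': "\<And>x. (F has_derivative D' x) (at x)" and s: "\<And>v. smooth (\<lambda>x. D' x v)"
    using smooth.simps[of F] by blast
  have "D' = D" using D' assms(2) has_derivative_unique by blast
  then have "\<forall>v. \<exists>E. \<forall>x. ((\<lambda>x. D x v) has_derivative E x) (at x)"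
    using s smooth_has_derivative by blast
  then show ?thesis by metis
qed

lemma qmul_inv_cancel1: "q \<noteq> 0 \<Longrightarrow> qmul q (qmul (qinv q) r) = r"
  and qmul_inv_cancel2: "q \<noteq> 0 \<Longrightarrow> qmul (qinv q) (qmul q r) = r"
  and qmul_inv_cancel3: "q \<noteq> 0 \<Longrightarrow> qmul q (qinv q) = (1,0)"
  and qmul_inv_cancel4: "q \<noteq> 0 \<Longrightarrow> qmul (qinv q) q = (1,0)"
  by (simp_all add: qmul_assoc[symmetric] qinv_right qinv_left)

lemmas qring = qmul_assoc qmul_add_left qmul_add_right qmul_diff_left qmul_diff_right
  qmul_minus_left qmul_minus_right qmul_scaleR_left qmul_scaleR_right

lemma key_alg:
  assumes "- (qmul (qmul Pa T) Db + qmul (qmul Pa Tb + qmul Q T) a)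
         = - (qmul (qmul Pb T) Da + qmul (qmul Pb Ta + qmul Q T) a)"
    and "Db = - qmul (qmul Pb T) a" "Da = - qmul (qmul Pa T) a" "a \<noteq> 0"
  shows "qmul Pa (Tb - qmul (qmul T Pb) T) = qmul Pb (Ta - qmul (qmul T Pa) T)"
proof -
  have "qmul (qmul Pa (Tb - qmul (qmul T Pb) T)) a = qmul (qmul Pb (Ta - qmul (qmul T Pa) T)) a"
    using assms(1) unfolding assms(2,3) by (simp add: qring algebra_simps)
  then show ?thesis using qmul_cancel_right[OF assms(4)] by blast
qed

lemma fhat_alg:
  assumes "T \<noteq> 0"
  shows "P + - qmul (qmul (qinv T) Tu) (qinv T) = - qmul (qmul (qinv T) (Tu - qmul (qmul T P) T)) (qinv T)"
  using assms by (simp add: qring qmul_inv_cancel1 qmul_inv_cancel2 qmul_inv_cancel3 qmul_inv_cancel4)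



lemma main_part1:
  fixes \<Gamma> :: "complex set" and \<beta>0 :: complex
    and f g \<alpha> T fhat :: "complex \<Rightarrow> quat"
  assumes HS: "HS_torus \<Gamma> \<beta>0 f g"
    and alpha_smooth: "smooth \<alpha>"
    and alpha_nz: "\<forall>z. \<alpha> z \<noteq> 0"
    and T_def: "\<forall>z. (\<alpha> has_derivative
                  (\<lambda>v. - qmul (qmul (qmul (qmul (qexpj (beta \<beta>0 z / 2)) (cq v)) (g z)) (T z)) (\<alpha> z)))
                (at z)"
    and T_nz: "\<forall>z. T z \<noteq> 0"
    and fhat_def: "fhat = (\<lambda>z. f z + qinv (T z))"
  shows "\<exists>\<omega>. (\<forall>z. (fhat has_derivative (\<lambda>u. - qmul (qmul (qinv (T z)) (\<omega> z u)) (qinv (T z)))) (at z))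
     \<and> (\<forall>z. \<omega> z \<i> = qmul (qmul (qmul (qinv (g z)) qi) (g z)) (\<omega> z 1))"
proof -
  define E where "E z = qexpj (beta \<beta>0 z / 2)" for z
  define \<Phi> where "\<Phi> z v = qmul (qmul (E z) (cq v)) (g z)" for z v
  have fder: "\<And>z. (f has_derivative \<Phi> z) (at z)"
    using HS unfolding HS_torus_def \<Phi>_def[abs_def] E_def by blast
  have fsm: "smooth f" and gnz: "\<And>z. g z \<noteq> 0" using HS unfolding HS_torus_def by auto
  have Enz: "\<And>z. E z \<noteq> 0" by (simp add: E_def qexpj_nz)
  have \<Phi>1: "\<And>z. \<Phi> z 1 = qmul (E z) (g z)" by (simp add: \<Phi>_def cq_def)
  have \<Phi>i: "\<And>z. \<Phi> z \<i> = qmul (qmul (E z) qi) (g z)" by (simp add: \<Phi>_def cq_def qi_def)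
  have \<Phi>1nz: "\<And>z. \<Phi> z 1 \<noteq> 0" by (simp add: \<Phi>1 qmul_nz Enz gnz)
  define D\<alpha> where "D\<alpha> z v = - qmul (qmul (\<Phi> z v) (T z)) (\<alpha> z)" for z v
  have ader: "\<And>z. (\<alpha> has_derivative D\<alpha> z) (at z)"
    using T_def unfolding D\<alpha>_def[abs_def] \<Phi>_def E_def by blast
  obtain \<Psi> where \<Psi>: "\<And>v z. ((\<lambda>x. \<Phi> x v) has_derivative \<Psi> v z) (at z)"
    using smooth_second[OF fsm fder] by blast
  obtain A where A: "\<And>v z. ((\<lambda>x. D\<alpha> x v) has_derivative A v z) (at z)"
    using smooth_second[OF alpha_smooth ader] by blast
  have Tform: "T = (\<lambda>z. - qmul (qmul (qinv (\<Phi> z 1)) (D\<alpha> z 1)) (qinv (\<alpha> z)))"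
  proof
    fix z
    show "T z = - qmul (qmul (qinv (\<Phi> z 1)) (D\<alpha> z 1)) (qinv (\<alpha> z))"
      using \<Phi>1nz[of z] alpha_nz
      by (simp add: D\<alpha>_def qring qmul_inv_cancel1 qmul_inv_cancel2 qmul_inv_cancel3 qmul_inv_cancel4)
  qed
  have "\<forall>z. \<exists>D. (T has_derivative D) (at z)"
  proof
    fix z
    have "\<exists>D. ((\<lambda>z. - qmul (qmul (qinv (\<Phi> z 1)) (D\<alpha> z 1)) (qinv (\<alpha> z))) has_derivative D) (at z)"
    proof -
      note 1 = has_derivative_qinv_comp[OF \<Psi> \<Phi>1nz]
      note 2 = has_derivative_qinv_comp[OF ader alpha_nz[rule_format]]
      show ?thesis
        by (rule exI, rule has_derivative_minus, rule has_derivative_qmul[OF has_derivative_qmul[OF 1 A] 2])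
    qed
    then show "\<exists>D. (T has_derivative D) (at z)" unfolding Tform .
  qed
  then obtain T' where T': "\<And>z. (T has_derivative T' z) (at z)" by metis
  define \<omega> where "\<omega> z u = T' z u - qmul (qmul (T z) (\<Phi> z u)) (T z)" for z u
  have key: "qmul (\<Phi> z 1) (\<omega> z \<i>) = qmul (\<Phi> z \<i>) (\<omega> z 1)" for z
  proof -
    have pr: "((\<lambda>x. D\<alpha> x v) has_derivative (\<lambda>h. - (qmul (qmul (\<Phi> z v) (T z)) (D\<alpha> z h)
        + qmul (qmul (\<Phi> z v) (T' z h) + qmul (\<Psi> v z h) (T z)) (\<alpha> z)))) (at z)" for v
      unfolding D\<alpha>_def[abs_def]
      by (intro has_derivative_minus has_derivative_qmul \<Psi> T' ader[unfolded D\<alpha>_def[abs_def]])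
    have Aeq: "A v z = (\<lambda>h. - (qmul (qmul (\<Phi> z v) (T z)) (D\<alpha> z h)
        + qmul (qmul (\<Phi> z v) (T' z h) + qmul (\<Psi> v z h) (T z)) (\<alpha> z)))" for v
      using has_derivative_unique[OF A pr] .
    have s1: "A 1 z \<i> = A \<i> z 1" by (rule second_deriv_sym[OF ader A A])
    have s2: "\<Psi> 1 z \<i> = \<Psi> \<i> z 1" by (rule second_deriv_sym[OF fder \<Psi> \<Psi>])
    show ?thesis unfolding \<omega>_def
      by (rule key_alg[where Q = "\<Psi> 1 z \<i>" and Db = "D\<alpha> z \<i>" and Da = "D\<alpha> z 1" and a = "\<alpha> z"])
        (use s1 s2 Aeq alpha_nz in \<open>auto simp: D\<alpha>_def\<close>)
  qed
  show ?thesis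
  proof (intro exI[of _ \<omega>] conjI allI)
    fix z
    have "(fhat has_derivative (\<lambda>u. \<Phi> z u + - qmul (qmul (qinv (T z)) (T' z u)) (qinv (T z)))) (at z)"
      unfolding fhat_def using T_nz
      by (intro has_derivative_add fder has_derivative_qinv_comp T') auto
    moreover have "(\<lambda>u. \<Phi> z u + - qmul (qmul (qinv (T z)) (T' z u)) (qinv (T z)))
       = (\<lambda>u. - qmul (qmul (qinv (T z)) (\<omega> z u)) (qinv (T z)))"
      unfolding \<omega>_def by (rule ext, rule fhat_alg, use T_nz in auto)
    ultimately show "(fhat has_derivative (\<lambda>u. - qmul (qmul (qinv (T z)) (\<omega> z u)) (qinv (T z)))) (at z)"
      by simp
  next
    fix z
    have "\<omega> z \<i> = qmul (qinv (\<Phi> z 1)) (qmul (\<Phi> z \<i>) (\<omega> z 1))"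
      using key[of z] \<Phi>1nz[of z] by (metis qmul_inv_cancel2)
    also have "\<dots> = qmul (qmul (qmul (qinv (g z)) qi) (g z)) (\<omega> z 1)"
      using Enz[of z] gnz[of z]
      by (simp add: \<Phi>1 \<Phi>i qinv_qmul qring qmul_inv_cancel1 qmul_inv_cancel2)
    finally show "\<omega> z \<i> = qmul (qmul (qmul (qinv (g z)) qi) (g z)) (\<omega> z 1)" .
  qed
qed



lemma inner_qj_M:
  fixes s :: real
  assumes "P \<noteq> 0"
  defines "\<tau> \<equiv> qmul (qinv (qexpj s)) P"
  shows "inner qj (qmul (qmul P qi) (qinv P)) = 0 \<longleftrightarrow> Im (cnj (fst \<tau>) * cnj (snd \<tau>)) = 0"
proof -
  have Enz: "qexpj s \<noteq> 0" by (rule qexpj_nz)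
  have Pe: "P = qmul (qexpj s) \<tau>" unfolding \<tau>_def using Enz by (simp add: qmul_inv_cancel1)
  have tnz: "\<tau> \<noteq> 0" using assms(1) Pe by auto
  have "qmul (qmul P qi) (qinv P) = qmul (qmul (qexpj s) (qmul (qmul \<tau> qi) (qinv \<tau>))) (qinv (qexpj s))"
    unfolding Pe using Enz tnz by (simp add: qinv_qmul qmul_assoc)
  then have "inner qj (qmul (qmul P qi) (qinv P)) = inner qj (qmul (qmul \<tau> qi) (qinv \<tau>))"
    by (simp add: E_conj_inner)
  also have "\<dots> = (1 / (norm \<tau>)\<^sup>2) * inner qj (qmul (qmul \<tau> qi) (qconj \<tau>))"
    by (simp add: qinv_alt qmul_scaleR_right)
  also have "\<dots> = (1 / (norm \<tau>)\<^sup>2) * (- 2 * Im (cnj (fst \<tau>) * cnj (snd \<tau>)))"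
    using tau_inner[of "fst \<tau>" "snd \<tau>"] by simp
  finally show ?thesis using tnz by (simp; arith)
qed

lemma lag_iff:
  assumes der: "\<And>z. (fhat has_derivative (\<lambda>u. - qmul (qmul (qinv (T z)) (\<omega> z u)) (qinv (T z)))) (at z)"
    and om: "\<And>z. \<omega> z \<i> = qmul (qmul (qmul (qinv (g z)) qi) (g z)) (\<omega> z 1)"
    and imm: "immersion fhat" and Tnz: "\<And>z. T z \<noteq> 0" and gnz: "\<And>z. g z \<noteq> 0"
  shows "lagrangian fhat \<longleftrightarrow>
    (\<forall>z. Im (cnj (fst (qmul (qinv (qexpj (s z))) (qmul (qinv (T z)) (qinv (g z)))))
             * cnj (snd (qmul (qinv (qexpj (s z))) (qmul (qinv (T z)) (qinv (g z)))))) = 0)"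
proof -
  define Df where "Df z u = - qmul (qmul (qinv (T z)) (\<omega> z u)) (qinv (T z))" for z u
  define P where "P z = qmul (qinv (T z)) (qinv (g z))" for z
  define M where "M z = qmul (qmul (P z) qi) (qinv (P z))" for z
  have Pnz: "P z \<noteq> 0" for z using Tnz gnz by (simp add: P_def qmul_nz qinv_nz)
  have derz: "(fhat has_derivative Df z) (at z)" for z using der unfolding Df_def[abs_def] .
  have Dfi: "Df z \<i> = qmul (M z) (Df z 1)" for z
  proof -
    have iP: "qinv (P z) = qmul (g z) (T z)" using Tnz gnz
      by (simp add: P_def qinv_qmul qinv_nz qinv_qinv)
    show ?thesis unfolding M_def iP unfolding Df_def om P_def using Tnz[of z] gnz[of z]
      by (simp add: qring qmul_inv_cancel1 qmul_inv_cancel2)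
  qed
  have X: "Df z 1 \<noteq> 0" for z
  proof -
    from imm obtain D where D: "(fhat has_derivative D) (at z)" "inj D" unfolding immersion_def by blast
    have "D = Df z" using has_derivative_unique[OF D(1) derz] .
    moreover have "D 0 = 0" using has_derivative_linear[OF D(1)] linear_0 by blast
    ultimately show ?thesis using D(2) by (metis inj_eq zero_neq_one)
  qed
  have om_eq: "omega (Df z 1) (Df z \<i>) = inner (Df z 1) (Df z 1) * inner qj (M z)" for z
    by (simp add: omega_def Dfi omega_scale)
  have lagz: "(\<forall>v w. omega (Df z v) (Df z w) = 0) \<longleftrightarrow> inner qj (M z) = 0" for z
  proof
    assume "\<forall>v w. omega (Df z v) (Df z w) = 0"
    then have "omega (Df z 1) (Df z \<i>) = 0" by blast
    then show "inner qj (M z) = 0" using X[of z] by (simp add: om_eq)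
  next
    assume h: "inner qj (M z) = 0"
    have lin: "linear (Df z)" using has_derivative_linear[OF derz] .
    have dec: "Df z v = Re v *\<^sub>R Df z 1 + Im v *\<^sub>R Df z \<i>" for v
    proof -
      have "v = Re v *\<^sub>R 1 + Im v *\<^sub>R \<i>" by (simp add: complex_eq_iff)
      then have "Df z v = Df z (Re v *\<^sub>R 1 + Im v *\<^sub>R \<i>)" by simp
      also have "\<dots> = Re v *\<^sub>R Df z 1 + Im v *\<^sub>R Df z \<i>" by (simp add: linear_add[OF lin] linear_scale[OF lin])
      finally show ?thesis .
    qed
    show "\<forall>v w. omega (Df z v) (Df z w) = 0"
    proof (intro allI)
      fix v w
      show "omega (Df z v) (Df z w) = 0"
        unfolding dec[of v] dec[of w] omega_expand om_eq h by simp
    qed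
  qed
  have "lagrangian fhat \<longleftrightarrow> (\<forall>z. inner qj (M z) = 0)"
    unfolding lagrangian_def
  proof safe
    fix z
    assume "\<forall>z D. (fhat has_derivative D) (at z) \<longrightarrow> (\<forall>v w. omega (D v) (D w) = 0)"
    then have "\<forall>v w. omega (Df z v) (Df z w) = 0" using derz by blast
    then show "inner qj (M z) = 0" using lagz by blast
  next
    show "immersion fhat" by (rule imm)
  next
    fix z D v w
    assume R: "\<forall>z. inner qj (M z) = 0" and hd: "(fhat has_derivative D) (at z)"
    have "D = Df z" using has_derivative_unique[OF hd derz] .
    then show "omega (D v) (D w) = 0" using lagz[of z] R by blast
  qed
  also have "\<dots> \<longleftrightarrow> (\<forall>z. Im (cnj (fst (qmul (qinv (qexpj (s z))) (P z))) * cnj (snd (qmul (qinv (qexpj (s z))) (P z)))) = 0)"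
    unfolding M_def using inner_qj_M[OF Pnz] by blast
  finally show ?thesis unfolding P_def .
qed



lemma qconj_scaleR: "qconj (r *\<^sub>R q) = r *\<^sub>R qconj q"
  by (simp add: qconj_def scaleR_conv_of_real)

lemma qinv_scaleR: "r \<noteq> 0 \<Longrightarrow> qinv (r *\<^sub>R q) = (1 / r) *\<^sub>R qinv q"
proof (cases "q = 0")
  case True then show ?thesis by (simp add: qinv_alt qconj_def zero_prod_def)
next
  case False
  assume r: "r \<noteq> 0"
  have "qinv (r *\<^sub>R q) = (1 / (r\<^sup>2 * (norm q)\<^sup>2) * r) *\<^sub>R qconj q"
    by (simp add: qinv_alt qconj_scaleR power_mult_distrib)
  also have "1 / (r\<^sup>2 * (norm q)\<^sup>2) * r = 1 / r * (1 / (norm q)\<^sup>2)" using r False by (simp add: field_simps power2_eq_square)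
  finally show ?thesis by (simp add: qinv_alt)
qed

lemma shift_deriv:
  assumes "(F has_derivative D) (at (z + \<gamma>))"
  shows "((\<lambda>x. F (x + \<gamma>)) has_derivative D) (at z)"
proof -
  have "((\<lambda>x. x + \<gamma>) has_derivative (\<lambda>h. h)) (at z)" by (auto intro!: derivative_eq_intros)
  from has_derivative_compose[OF this assms] show ?thesis by simp
qed

lemma qexpj_shift:
  assumes "k \<in> \<int>"
  shows "qexpj (a + pi * k) = cos (pi * k) *\<^sub>R qexpj a \<and> (cos (pi * k))\<^sup>2 = 1"
proof -
  have s: "sin (pi * k) = 0" using sin_times_pi_eq_0[of k] assms by (simp add: mult.commute)
  then have "(cos (pi * k))\<^sup>2 = 1" using sin_cos_squared_add[of "pi * k"] by simp
  then show ?thesis using s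
    by (simp add: qexpj_def cos_add sin_add scaleR_conv_of_real prod_eq_iff)
qed

lemma tau_periodic:
  fixes \<Gamma> :: "complex set" and \<beta>0 :: complex
    and f g \<alpha> T :: "complex \<Rightarrow> quat"
  assumes HS: "HS_torus \<Gamma> \<beta>0 f g"
    and alpha_nz: "\<forall>z. \<alpha> z \<noteq> 0"
    and alpha_mult: "has_multiplier \<Gamma> \<alpha>"
    and T_def: "\<forall>z. (\<alpha> has_derivative
                  (\<lambda>v. - qmul (qmul (qmul (qmul (qexpj (beta \<beta>0 z / 2)) (cq v)) (g z)) (T z)) (\<alpha> z)))
                (at z)"
    and T_nz: "\<forall>z. T z \<noteq> 0"
  shows "periodic \<Gamma> (\<lambda>z. qmul (qinv (qexpj (beta \<beta>0 z / 2))) (qmul (qinv (T z)) (qinv (g z))))"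
proof -
  define E where "E z = qexpj (beta \<beta>0 z / 2)" for z
  define \<Phi> where "\<Phi> z v = qmul (qmul (E z) (cq v)) (g z)" for z v
  have fder: "\<And>z. (f has_derivative \<Phi> z) (at z)"
    using HS unfolding HS_torus_def \<Phi>_def[abs_def] E_def by blast
  have fper: "periodic \<Gamma> f" and dual: "\<beta>0 \<in> dual_lattice \<Gamma>" and gnz: "\<And>z. g z \<noteq> 0"
    using HS unfolding HS_torus_def by auto
  have Enz: "\<And>z. E z \<noteq> 0" by (simp add: E_def qexpj_nz)
  have \<Phi>1: "\<And>z. \<Phi> z 1 = qmul (E z) (g z)" by (simp add: \<Phi>_def cq_def)
  have \<Phi>1nz: "\<And>z. \<Phi> z 1 \<noteq> 0" by (simp add: \<Phi>1 qmul_nz Enz gnz)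
  define D\<alpha> where "D\<alpha> z v = - qmul (qmul (\<Phi> z v) (T z)) (\<alpha> z)" for z v
  have ader: "\<And>z. (\<alpha> has_derivative D\<alpha> z) (at z)"
    using T_def unfolding D\<alpha>_def[abs_def] \<Phi>_def E_def by blast
  from alpha_mult obtain h where hnz: "\<And>\<gamma>. \<gamma> \<in> \<Gamma> \<Longrightarrow> h \<gamma> \<noteq> 0"
    and hm: "\<And>\<gamma> z. \<gamma> \<in> \<Gamma> \<Longrightarrow> \<alpha> (z + \<gamma>) = qmul (\<alpha> z) (cq (h \<gamma>))"
    unfolding has_multiplier_def by blast
  show ?thesis unfolding periodic_def E_def[symmetric]
  proof (intro ballI allI)
    fix \<gamma> z assume g: "\<gamma> \<in> \<Gamma>"
    have cqnz: "cq (h \<gamma>) \<noteq> 0" using hnz[OF g] by (simp add: cq_def zero_prod_def)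
    have "(f has_derivative \<Phi> (z + \<gamma>)) (at z)"
    proof -
      have "(\<lambda>x. f (x + \<gamma>)) = f" using fper g unfolding periodic_def by auto
      with shift_deriv[OF fder] show ?thesis by metis
    qed
    then have \<Phi>per: "\<Phi> (z + \<gamma>) = \<Phi> z" using has_derivative_unique fder by blast
    have "((\<lambda>x. \<alpha> (x + \<gamma>)) has_derivative D\<alpha> (z + \<gamma>)) (at z)" by (rule shift_deriv[OF ader])
    moreover have "((\<lambda>x. \<alpha> (x + \<gamma>)) has_derivative (\<lambda>v. qmul (D\<alpha> z v) (cq (h \<gamma>)))) (at z)"
    proof -
      have "((\<lambda>x. qmul (\<alpha> x) (cq (h \<gamma>))) has_derivative (\<lambda>v. qmul (\<alpha> z) 0 + qmul (D\<alpha> z v) (cq (h \<gamma>)))) (at z)"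
        by (rule has_derivative_qmul[OF ader has_derivative_const])
      moreover have "(\<lambda>x. \<alpha> (x + \<gamma>)) = (\<lambda>x. qmul (\<alpha> x) (cq (h \<gamma>)))" using hm[OF g] by auto
      ultimately show ?thesis by simp
    qed
    ultimately have "D\<alpha> (z + \<gamma>) = (\<lambda>v. qmul (D\<alpha> z v) (cq (h \<gamma>)))" using has_derivative_unique by blast
    then have "D\<alpha> (z + \<gamma>) 1 = qmul (D\<alpha> z 1) (cq (h \<gamma>))" by simp
    then have "qmul (\<Phi> z 1) (qmul (T (z + \<gamma>)) (qmul (\<alpha> z) (cq (h \<gamma>))))
        = qmul (\<Phi> z 1) (qmul (T z) (qmul (\<alpha> z) (cq (h \<gamma>))))"
      unfolding D\<alpha>_def \<Phi>per hm[OF g] by (simp add: qring)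
    then have Tper: "T (z + \<gamma>) = T z"
      using qmul_cancel_left[OF \<Phi>1nz] qmul_cancel_right[OF qmul_nz[OF alpha_nz[rule_format] cqnz]] by blast
    obtain k where k: "k \<in> \<int>" "\<beta>0 \<bullet> \<gamma> = k" using dual g unfolding dual_lattice_def by blast
    have eq: "beta \<beta>0 (z + \<gamma>) / 2 = beta \<beta>0 z / 2 + pi * k"
      using k by (simp add: beta_def inner_add_right algebra_simps)
    have Eshift: "E (z + \<gamma>) = cos (pi * k) *\<^sub>R E z"
      unfolding E_def eq using qexpj_shift[OF k(1)] by blast
    have c2: "(cos (pi * k))\<^sup>2 = 1" using qexpj_shift[OF k(1)] by blast
    define c where "c = cos (pi * k)"
    have cnz: "c \<noteq> 0" using c2 by (auto simp: c_def)
    have "qmul (E z) (c *\<^sub>R g (z + \<gamma>)) = qmul (E z) (g z)"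
      using \<Phi>per \<Phi>1[of z] \<Phi>1[of "z + \<gamma>"] Eshift
      by (metis c_def qmul_scaleR_left qmul_scaleR_right)
    then have "c *\<^sub>R g (z + \<gamma>) = g z" using qmul_cancel_left[OF Enz] by blast
    then have gsh: "g (z + \<gamma>) = (1 / c) *\<^sub>R g z" using cnz by (metis scaleR_scaleR divide_self_if mult.commute
        mult_1 scaleR_one times_divide_eq_right)
    show "qmul (qinv (E (z + \<gamma>))) (qmul (qinv (T (z + \<gamma>))) (qinv (g (z + \<gamma>))))
        = qmul (qinv (E z)) (qmul (qinv (T z)) (qinv (g z)))"
      unfolding Tper gsh Eshift c_def[symmetric] using cnz c2
      by (simp add: qinv_scaleR qmul_scaleR_left qmul_scaleR_right c_def power2_eq_square)
  qed
qed



lemma cq_decomp: "cq a + qmul qj (cq b) = (a, cnj b)"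
  by (simp add: cq_def qj_def qmul_def)

theorem corollary3p10:
  fixes \<Gamma> :: "complex set" and \<beta>0 :: complex
    and f g \<alpha> T fhat :: "complex \<Rightarrow> quat"
  assumes HS: "HS_torus \<Gamma> \<beta>0 f g"
    and alpha_smooth: "smooth \<alpha>"
    and alpha_nz: "\<forall>z. \<alpha> z \<noteq> 0"
    and alpha_hol: "holomorphic_wrt (\<lambda>z. qmul (qexpj (beta \<beta>0 z)) qi) \<alpha>"
    and alpha_mult: "has_multiplier \<Gamma> \<alpha>"
    and T_def: "\<forall>z. (\<alpha> has_derivative
                  (\<lambda>v. - qmul (qmul (qmul (qmul (qexpj (beta \<beta>0 z / 2)) (cq v)) (g z)) (T z)) (\<alpha> z)))
                (at z)"
    and T_nz: "\<forall>z. T z \<noteq> 0"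
    and fhat_def: "fhat = (\<lambda>z. f z + qinv (T z))"
    and fhat_imm: "immersion fhat"
  shows "lagrangian fhat \<longleftrightarrow>
    (\<exists>\<tau>0 \<tau>1 :: complex \<Rightarrow> complex. periodic \<Gamma> \<tau>0 \<and> periodic \<Gamma> \<tau>1 \<and>
       (\<forall>z. fhat z = f z + qmul (qmul (qexpj (beta \<beta>0 z / 2)) (cq (\<tau>0 z) + qmul qj (cq (\<tau>1 z)))) (g z)) \<and>
       (\<forall>z. Im (cnj (\<tau>0 z) * \<tau>1 z) = 0))"
proof -
  define E where "E z = qexpj (beta \<beta>0 z / 2)" for z
  define \<tau> where "\<tau> z = qmul (qinv (E z)) (qmul (qinv (T z)) (qinv (g z)))" for z
  have gnz: "\<And>z. g z \<noteq> 0" using HS unfolding HS_torus_def by auto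
  have Enz: "\<And>z. E z \<noteq> 0" by (simp add: E_def qexpj_nz)
  obtain \<omega> where der: "\<And>z. (fhat has_derivative (\<lambda>u. - qmul (qmul (qinv (T z)) (\<omega> z u)) (qinv (T z)))) (at z)"
    and om: "\<And>z. \<omega> z \<i> = qmul (qmul (qmul (qinv (g z)) qi) (g z)) (\<omega> z 1)"
    using main_part1[OF HS alpha_smooth alpha_nz T_def T_nz fhat_def] by blast
  have lag: "lagrangian fhat \<longleftrightarrow> (\<forall>z. Im (cnj (fst (\<tau> z)) * cnj (snd (\<tau> z))) = 0)"
    using lag_iff[OF der om fhat_imm T_nz[rule_format] gnz, of "\<lambda>z. beta \<beta>0 z / 2"]
    unfolding \<tau>_def E_def .
  have per: "periodic \<Gamma> \<tau>"
    using tau_periodic[OF HS alpha_nz alpha_mult T_def T_nz] unfolding \<tau>_def E_def .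
  have recon: "qmul (qmul (E z) (\<tau> z)) (g z) = qinv (T z)" for z
    using Enz[of z] gnz[of z]
    by (simp add: \<tau>_def qring qmul_inv_cancel1 qmul_inv_cancel2 qmul_inv_cancel3 qmul_inv_cancel4)
  have uniq: "qmul (qmul (E z) \<sigma>) (g z) = qinv (T z) \<Longrightarrow> \<sigma> = \<tau> z" for z \<sigma>
    using recon[of z] qmul_cancel_left[OF Enz] qmul_cancel_right[OF gnz] by metis
  show ?thesis
  proof
    assume L: "lagrangian fhat"
    show "\<exists>\<tau>0 \<tau>1 :: complex \<Rightarrow> complex. periodic \<Gamma> \<tau>0 \<and> periodic \<Gamma> \<tau>1 \<and>
       (\<forall>z. fhat z = f z + qmul (qmul (qexpj (beta \<beta>0 z / 2)) (cq (\<tau>0 z) + qmul qj (cq (\<tau>1 z)))) (g z)) \<and>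
       (\<forall>z. Im (cnj (\<tau>0 z) * \<tau>1 z) = 0)"
    proof -
      have p: "periodic \<Gamma> (\<lambda>z. fst (\<tau> z))" "periodic \<Gamma> (\<lambda>z. cnj (snd (\<tau> z)))"
        using per unfolding periodic_def by auto
      have fz: "\<forall>z. fhat z = f z + qmul (qmul (qexpj (beta \<beta>0 z / 2)) (cq (fst (\<tau> z)) + qmul qj (cq (cnj (snd (\<tau> z)))))) (g z)"
        unfolding cq_decomp using recon by (simp add: fhat_def E_def)
      have cz: "\<forall>z. Im (cnj (fst (\<tau> z)) * cnj (snd (\<tau> z))) = 0" using L lag by blast
      show ?thesis
        by (rule exI[of _ "\<lambda>z. fst (\<tau> z)"], rule exI[of _ "\<lambda>z. cnj (snd (\<tau> z))"]) (use p fz cz in simp)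
    qed
  next
    assume "\<exists>\<tau>0 \<tau>1 :: complex \<Rightarrow> complex. periodic \<Gamma> \<tau>0 \<and> periodic \<Gamma> \<tau>1 \<and>
       (\<forall>z. fhat z = f z + qmul (qmul (qexpj (beta \<beta>0 z / 2)) (cq (\<tau>0 z) + qmul qj (cq (\<tau>1 z)))) (g z)) \<and>
       (\<forall>z. Im (cnj (\<tau>0 z) * \<tau>1 z) = 0)"
    then obtain \<tau>0 \<tau>1 :: "complex \<Rightarrow> complex" where
      fh: "\<And>z. fhat z = f z + qmul (qmul (E z) (\<tau>0 z, cnj (\<tau>1 z))) (g z)"
      and c: "\<And>z. Im (cnj (\<tau>0 z) * \<tau>1 z) = 0"
      unfolding cq_decomp E_def by blast
    have "(\<tau>0 z, cnj (\<tau>1 z)) = \<tau> z" for z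
      by (rule uniq) (use fh[of z] in \<open>simp add: fhat_def\<close>)
    then have "Im (cnj (fst (\<tau> z)) * cnj (snd (\<tau> z))) = 0" for z
      using c[of z] by (metis complex_cnj_cnj fst_conv snd_conv)
    then show "lagrangian fhat" using lag by blast
  qed
qed


end
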